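(* Let $\mathcal{A}\in\mathbb{C}^{n\times n\times n\times n}$ be a CPS tensor. Then $\langle X,\mathcal{A}X\rangle\ge0$ for all Hermitian positive semidefinite $X\in\mathbb{C}^{n\times n}$ if and only if $\langle X,\mathcal{A}X\rangle\ge0$ for all real symmetric positive semidefinite $X\in\mathbb{R}^{n\times n}$.
   Context: A tensor $\mathcal{A}\in\mathbb{C}^{n\times n\times n\times n}$ is conjugate partial-symmetric (CPS) if $\mathcal{A}_{ijkl}=\overline{\mathcal{A}_{klij}}$ and $\mathcal{A}_{ijkl}=\mathcal{A}_{jikl}=\mathcal{A}_{ijlk}$ for all indices. For $X\in\mathbb{C}^{n\times n}$, $\langle X,\mathcal{A}X\rangle=\sum_{i,j,k,l}\mathcal{A}_{ijkl}X_{kl}\overline{X_{ij}}$. *)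

theory Defs
  imports "HOL-Analysis.Analysis" "HOL-Library.Complex_Order"
begin

text \<open>Fourth-order tensors in C^{n x n x n x n}, index set the finite type 'n.
  The order on complex numbers (HOL-Library.Complex_Order): z \<ge> 0 iff z is real and nonnegative.\<close>

type_synonym 'n tensor4 = "'n \<Rightarrow> 'n \<Rightarrow> 'n \<Rightarrow> 'n \<Rightarrow> complex"

definition CPS :: "('n::finite) tensor4 \<Rightarrow> bool" where
  "CPS A \<longleftrightarrow> (\<forall>i j k l. A i j k l = cnj (A k l i j) \<and> A i j k l = A j i k l \<and> A i j k l = A i j l k)"

definition tform :: "('n::finite) tensor4 \<Rightarrow> complex^'n^'n \<Rightarrow> complex" where
  "tform A X = (\<Sum>i\<in>UNIV. \<Sum>j\<in>UNIV. \<Sum>k\<in>UNIV. \<Sum>l\<in>UNIV. A i j k l * X $ k $ l * cnj (X $ i $ j))"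

definition hermitian_psd :: "complex^'n^'n \<Rightarrow> bool" where
  "hermitian_psd X \<longleftrightarrow> (\<forall>i j. X $ i $ j = cnj (X $ j $ i)) \<and>
     (\<forall>v :: complex^'n. (\<Sum>i\<in>UNIV. \<Sum>j\<in>UNIV. cnj (v $ i) * X $ i $ j * v $ j) \<ge> 0)"

definition real_sym_psd :: "real^'n^'n \<Rightarrow> bool" where
  "real_sym_psd X \<longleftrightarrow> (\<forall>i j. X $ i $ j = X $ j $ i) \<and>
     (\<forall>v :: real^'n. (\<Sum>i\<in>UNIV. \<Sum>j\<in>UNIV. v $ i * X $ i $ j * v $ j) \<ge> 0)"

definition cmat_of_real :: "real^'n^'n \<Rightarrow> complex^'n^'n" where
  "cmat_of_real X = (\<chi> i j. complex_of_real (X $ i $ j))"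

end

theory Submission
  imports Defs
begin

lemma sym_sum:
  fixes f Y :: "'n::finite \<Rightarrow> 'n \<Rightarrow> complex"
  assumes fs: "\<And>i j. f i j = f j i" and yh: "\<And>i j. Y i j = cnj (Y j i)"
  shows "(\<Sum>i\<in>UNIV. \<Sum>j\<in>UNIV. f i j * Y i j) = (\<Sum>i\<in>UNIV. \<Sum>j\<in>UNIV. f i j * complex_of_real (Re (Y i j)))"
proof -
  let ?S = "(\<Sum>i\<in>UNIV. \<Sum>j\<in>UNIV. f i j * Y i j)"
  have sw: "?S = (\<Sum>i\<in>UNIV. \<Sum>j\<in>UNIV. f i j * Y j i)"
    by (subst sum.swap) (simp add: fs)
  have "2 * ?S = (\<Sum>i\<in>UNIV. \<Sum>j\<in>UNIV. f i j * (Y i j + Y j i))"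
    by (subst mult_2, subst (2) sw) (simp add: sum.distrib[symmetric] distrib_left)
  also have "\<dots> = (\<Sum>i\<in>UNIV. \<Sum>j\<in>UNIV. f i j * (2 * complex_of_real (Re (Y i j))))"
  proof (rule sum.cong[OF refl], rule sum.cong[OF refl])
    fix i j
    have "Y j i = cnj (Y i j)" using yh[of i j] by simp
    then show "f i j * (Y i j + Y j i) = f i j * (2 * complex_of_real (Re (Y i j)))"
      by (simp add: complex_add_cnj)
  qed
  also have "\<dots> = 2 * (\<Sum>i\<in>UNIV. \<Sum>j\<in>UNIV. f i j * complex_of_real (Re (Y i j)))"
    by (simp add: sum_distrib_left algebra_simps)
  finally show ?thesis by simp
qed

lemma spec4: "\<forall>i j k l. P i j k l \<Longrightarrow> P i j k l" by blast

lemma tform_re: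
  fixes A :: "('n::finite) tensor4"
  assumes "CPS A" and h: "\<And>i j. X $ i $ j = cnj (X $ j $ i)"
  shows "tform A X = tform A (cmat_of_real (\<chi> i j. Re (X $ i $ j)))"
proof -
  have c: "A i j k l = cnj (A k l i j) \<and> A i j k l = A j i k l \<and> A i j k l = A i j l k" for i j k l
    using assms(1) unfolding CPS_def by (rule spec4)
  have s1: "A i j k l = A i j l k" for i j k l using c[of i j k l] by (elim conjE)
  have s2: "A i j k l = A j i k l" for i j k l using c[of i j k l] by (elim conjE)
  define B where "B i j = (\<Sum>k\<in>UNIV. \<Sum>l\<in>UNIV. A i j k l * X $ k $ l)" for i j
  have tf: "tform A X = (\<Sum>i\<in>UNIV. \<Sum>j\<in>UNIV. B i j * cnj (X $ i $ j))"
    unfolding tform_def B_def by (simp add: sum_distrib_right mult.assoc)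
  have B: "B i j = (\<Sum>k\<in>UNIV. \<Sum>l\<in>UNIV. A i j k l * complex_of_real (Re (X $ k $ l)))" for i j
    unfolding B_def by (rule sym_sum[where f="\<lambda>k l. A i j k l" and Y="\<lambda>k l. X$k$l"]) (rule s1, rule h)
  have Bs: "B i j = B j i" for i j unfolding B_def by (rule sum.cong[OF refl], rule sum.cong[OF refl], subst s2, rule refl)
  have "tform A X = (\<Sum>i\<in>UNIV. \<Sum>j\<in>UNIV. B i j * complex_of_real (Re (cnj (X $ i $ j))))"
    unfolding tf by (rule sym_sum[where f=B and Y="\<lambda>i j. cnj (X$i$j)"]) (rule Bs, rule arg_cong[where f=cnj], rule h)
  also have "\<dots> = tform A (cmat_of_real (\<chi> i j. Re (X $ i $ j)))"
    unfolding tform_def cmat_of_real_def B by (simp add: sum_distrib_right mult.assoc)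
  finally show ?thesis .
qed

lemma real_to_herm:
  assumes "real_sym_psd X"
  shows "hermitian_psd (cmat_of_real X)"
proof -
  have sy: "\<And>i j. X $ i $ j = X $ j $ i" and ps: "\<And>v. (\<Sum>i\<in>UNIV. \<Sum>j\<in>UNIV. v $ i * X $ i $ j * v $ j) \<ge> 0"
    using assms unfolding real_sym_psd_def by blast+
  show ?thesis unfolding hermitian_psd_def
  proof (intro conjI allI)
    fix i j show "cmat_of_real X $ i $ j = cnj (cmat_of_real X $ j $ i)"
      unfolding cmat_of_real_def using sy by simp
  next
    fix v :: "complex^'a"
    define a where "a = (\<chi> i. Re (v $ i))"
    define b where "b = (\<chi> i. Im (v $ i))"
    let ?S = "(\<Sum>i\<in>UNIV. \<Sum>j\<in>UNIV. cnj (v $ i) * cmat_of_real X $ i $ j * v $ j)"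
    have re: "Re ?S = (\<Sum>i\<in>UNIV. \<Sum>j\<in>UNIV. a $ i * X $ i $ j * a $ j) + (\<Sum>i\<in>UNIV. \<Sum>j\<in>UNIV. b $ i * X $ i $ j * b $ j)"
      unfolding a_def b_def cmat_of_real_def
      by (simp add: Re_sum sum.distrib[symmetric] algebra_simps)
    have sw: "(\<Sum>i\<in>UNIV. \<Sum>j\<in>UNIV. X $ i $ j * (b $ i * a $ j)) = (\<Sum>i\<in>UNIV. \<Sum>j\<in>UNIV. X $ i $ j * (a $ i * b $ j))"
      by (subst sum.swap) (simp add: sy mult.commute)
    have im: "Im ?S = (\<Sum>i\<in>UNIV. \<Sum>j\<in>UNIV. X $ i $ j * (a $ i * b $ j)) - (\<Sum>i\<in>UNIV. \<Sum>j\<in>UNIV. X $ i $ j * (b $ i * a $ j))"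
      unfolding a_def b_def cmat_of_real_def
      by (simp add: Im_sum sum_subtractf[symmetric] algebra_simps)
    show "?S \<ge> 0" unfolding less_eq_complex_def using re im sw ps[of a] ps[of b] by simp
  qed
qed

lemma herm_to_real:
  assumes "hermitian_psd X"
  shows "real_sym_psd (\<chi> i j. Re (X $ i $ j))"
proof -
  have h: "\<And>i j. X $ i $ j = cnj (X $ j $ i)" and ps: "\<And>v. (\<Sum>i\<in>UNIV. \<Sum>j\<in>UNIV. cnj (v $ i) * X $ i $ j * v $ j) \<ge> 0"
    using assms unfolding hermitian_psd_def by blast+
  show ?thesis unfolding real_sym_psd_def
  proof (intro conjI allI)
    fix i j show "(\<chi> i j. Re (X $ i $ j)) $ i $ j = (\<chi> i j. Re (X $ i $ j)) $ j $ i"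
      using h[of i j] by simp
  next
    fix v :: "real^'a"
    have "0 \<le> Re (\<Sum>i\<in>UNIV. \<Sum>j\<in>UNIV. cnj ((\<chi> i. complex_of_real (v $ i)) $ i) * X $ i $ j * (\<chi> i. complex_of_real (v $ i)) $ j)"
      using ps[of "\<chi> i. complex_of_real (v $ i)"] unfolding less_eq_complex_def by simp
    then show "0 \<le> (\<Sum>i\<in>UNIV. \<Sum>j\<in>UNIV. v $ i * (\<chi> i j. Re (X $ i $ j)) $ i $ j * v $ j)"
      by (simp add: Re_sum)
  qed
qed

theorem corollary5p4:
  fixes A :: "('n::finite) tensor4"
  assumes "CPS A"
  shows "(\<forall>X :: complex^'n^'n. hermitian_psd X \<longrightarrow> tform A X \<ge> 0) \<longleftrightarrow>
         (\<forall>X :: real^'n^'n. real_sym_psd X \<longrightarrow> tform A (cmat_of_real X) \<ge> 0)"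
proof
  assume "\<forall>X :: complex^'n^'n. hermitian_psd X \<longrightarrow> tform A X \<ge> 0"
  then show "\<forall>X :: real^'n^'n. real_sym_psd X \<longrightarrow> tform A (cmat_of_real X) \<ge> 0"
    using real_to_herm by blast
next
  assume R: "\<forall>X :: real^'n^'n. real_sym_psd X \<longrightarrow> tform A (cmat_of_real X) \<ge> 0"
  show "\<forall>X :: complex^'n^'n. hermitian_psd X \<longrightarrow> tform A X \<ge> 0"
  proof (intro allI impI)
    fix X :: "complex^'n^'n" assume H: "hermitian_psd X"
    have h: "\<And>i j. X $ i $ j = cnj (X $ j $ i)" using H unfolding hermitian_psd_def by blast
    show "tform A X \<ge> 0"
      using tform_re[OF assms h] R herm_to_real[OF H] by simp
  qed
qed

end
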